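(* For all integers $n$ and $\alpha$ with $n\le\alpha\le 2^{n-1}+1$, there exists a minimal $n$-state nondeterministic finite automaton accepting a suffix-closed language whose equivalent minimal deterministic finite automaton has exactly $\alpha$ states.
   Context: NFAs have a single initial state and a transition function $\delta:Q\times\Sigma\to 2^Q$ that may map to the empty set (no sink state is needed or counted); DFAs are complete, so a sink state is counted. A minimal $n$-state NFA is an NFA with $n$ states such that no NFA with fewer states accepts the same language. A language $L\subseteq\Sigma^*$ is suffix-closed if $yz\in L$ implies $z\in L$ for all $y,z\in\Sigma^*$. *)

theory Defs
  imports Main
begin

text \<open>Nondeterministic finite automata over an input alphabet \<open>\<Sigma>\<close>: a finite state set \<open>Q\<close>,
  a single initial state \<open>q0\<close>, a transition function \<open>\<delta> : Q \<times> \<Sigma> \<rightarrow> 2^Q\<close>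
  (possibly empty sets, no sink state counted) and final states \<open>F\<close>.\<close>

definition nfa :: "'a set \<Rightarrow> 's set \<Rightarrow> 's \<Rightarrow> ('s \<Rightarrow> 'a \<Rightarrow> 's set) \<Rightarrow> 's set \<Rightarrow> bool" where
  "nfa \<Sigma> Q q0 \<delta> F \<longleftrightarrow> finite \<Sigma> \<and> finite Q \<and> q0 \<in> Q \<and> F \<subseteq> Q \<and>
     (\<forall>q\<in>Q. \<forall>a\<in>\<Sigma>. \<delta> q a \<subseteq> Q)"

fun nfa_run :: "('s \<Rightarrow> 'a \<Rightarrow> 's set) \<Rightarrow> 's set \<Rightarrow> 'a list \<Rightarrow> 's set" where
  "nfa_run \<delta> S [] = S"
| "nfa_run \<delta> S (a # w) = nfa_run \<delta> (\<Union>q\<in>S. \<delta> q a) w"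

definition nfa_lang :: "'a set \<Rightarrow> 's \<Rightarrow> ('s \<Rightarrow> 'a \<Rightarrow> 's set) \<Rightarrow> 's set \<Rightarrow> 'a list set" where
  "nfa_lang \<Sigma> q0 \<delta> F = {w \<in> lists \<Sigma>. nfa_run \<delta> {q0} w \<inter> F \<noteq> {}}"

text \<open>Complete deterministic finite automata (a sink state, if needed, is part of \<open>Q\<close>).\<close>

definition dfa :: "'a set \<Rightarrow> 's set \<Rightarrow> 's \<Rightarrow> ('s \<Rightarrow> 'a \<Rightarrow> 's) \<Rightarrow> 's set \<Rightarrow> bool" where
  "dfa \<Sigma> Q q0 \<delta> F \<longleftrightarrow> finite \<Sigma> \<and> finite Q \<and> q0 \<in> Q \<and> F \<subseteq> Q \<and>
     (\<forall>q\<in>Q. \<forall>a\<in>\<Sigma>. \<delta> q a \<in> Q)"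

definition dfa_lang :: "'a set \<Rightarrow> 's \<Rightarrow> ('s \<Rightarrow> 'a \<Rightarrow> 's) \<Rightarrow> 's set \<Rightarrow> 'a list set" where
  "dfa_lang \<Sigma> q0 \<delta> F = {w \<in> lists \<Sigma>. foldl \<delta> q0 w \<in> F}"

text \<open>Minimality. States of competing automata range over finite sets of naturals,
  which is no loss of generality (any finite state set can be relabelled).\<close>

definition minimal_nfa :: "'a set \<Rightarrow> nat set \<Rightarrow> nat \<Rightarrow> (nat \<Rightarrow> 'a \<Rightarrow> nat set) \<Rightarrow> nat set \<Rightarrow> bool" where
  "minimal_nfa \<Sigma> Q q0 \<delta> F \<longleftrightarrow> nfa \<Sigma> Q q0 \<delta> F \<and>
     (\<forall>(Q'::nat set) q0' \<delta>' F'. nfa \<Sigma> Q' q0' \<delta>' F' \<and> nfa_lang \<Sigma> q0' \<delta>' F' = nfa_lang \<Sigma> q0 \<delta> F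
        \<longrightarrow> card Q \<le> card Q')"

definition min_dfa_size :: "'a set \<Rightarrow> 'a list set \<Rightarrow> nat \<Rightarrow> bool" where
  "min_dfa_size \<Sigma> L k \<longleftrightarrow>
     (\<exists>(Q::nat set) q0 \<delta> F. dfa \<Sigma> Q q0 \<delta> F \<and> dfa_lang \<Sigma> q0 \<delta> F = L \<and> card Q = k) \<and>
     (\<forall>(Q::nat set) q0 \<delta> F. dfa \<Sigma> Q q0 \<delta> F \<and> dfa_lang \<Sigma> q0 \<delta> F = L \<longrightarrow> k \<le> card Q)"

definition suffix_closed :: "'a list set \<Rightarrow> bool" where
  "suffix_closed L \<longleftrightarrow> (\<forall>y z. y @ z \<in> L \<longrightarrow> z \<in> L)"

end

theory Submission
  imports Defs
begin


lemma nfa_run_append: "nfa_run \<delta> S (x @ y) = nfa_run \<delta> (nfa_run \<delta> S x) y"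
  by (induction x arbitrary: S) auto

lemma nfa_run_union: "nfa_run \<delta> S w = (\<Union>p\<in>S. nfa_run \<delta> {p} w)"
proof (induction w arbitrary: S)
  case Nil then show ?case by auto
next
  case (Cons a w)
  have "nfa_run \<delta> S (a#w) = (\<Union>p\<in>(\<Union>q\<in>S. \<delta> q a). nfa_run \<delta> {p} w)"
    by (simp only: nfa_run.simps) (rule Cons.IH)
  also have "\<dots> = (\<Union>q\<in>S. \<Union>p\<in>\<delta> q a. nfa_run \<delta> {p} w)" by blast
  also have "\<dots> = (\<Union>q\<in>S. nfa_run \<delta> {q} (a#w))"
  proof -
    have "(\<Union>p\<in>\<delta> q a. nfa_run \<delta> {p} w) = nfa_run \<delta> {q} (a#w)" for q
      using Cons.IH[of "\<delta> q a"] by simp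
    then show ?thesis by simp
  qed
  finally show ?case .
qed

lemma nfa_run_mono: "S \<subseteq> S' \<Longrightarrow> nfa_run \<delta> S w \<subseteq> nfa_run \<delta> S' w"
  using nfa_run_union[of \<delta> S w] nfa_run_union[of \<delta> S' w] by blast

lemma nfa_run_sub: "(\<forall>q\<in>Q. \<forall>a\<in>\<Sigma>. \<delta> q a \<subseteq> Q) \<Longrightarrow> S \<subseteq> Q \<Longrightarrow> w \<in> lists \<Sigma> \<Longrightarrow> nfa_run \<delta> S w \<subseteq> Q"
proof (induction w arbitrary: S)
  case Nil then show ?case by simp
next
  case (Cons a w)
  have aw: "a \<in> \<Sigma>" "w \<in> lists \<Sigma>" using Cons.prems(3) by auto
  have "\<delta> q a \<subseteq> Q" if "q \<in> S" for q using Cons.prems(1,2) aw(1) that by blast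
  then have "(\<Union>q\<in>S. \<delta> q a) \<subseteq> Q" by blast
  moreover note aw(2)
  ultimately show ?case using Cons.IH[OF Cons.prems(1)] by simp
qed

lemma nfa_fooling:
  assumes "nfa \<Sigma> Q q0 \<delta> F"
   and "\<forall>i<k. X i \<in> lists \<Sigma> \<and> Y i \<in> lists \<Sigma> \<and> X i @ Y i \<in> nfa_lang \<Sigma> q0 \<delta> F"
   and "\<forall>i<k. \<forall>j<k. i \<noteq> j \<longrightarrow> X i @ Y j \<notin> nfa_lang \<Sigma> q0 \<delta> F \<or> X j @ Y i \<notin> nfa_lang \<Sigma> q0 \<delta> F"
  shows "k \<le> card Q"
proof -
  have ex: "\<exists>p. p \<in> nfa_run \<delta> {q0} (X i) \<and> nfa_run \<delta> {p} (Y i) \<inter> F \<noteq> {}" if "i<k" for i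
  proof -
    from assms(2) that have "nfa_run \<delta> {q0} (X i @ Y i) \<inter> F \<noteq> {}" by (auto simp: nfa_lang_def)
    then have "(\<Union>p\<in>nfa_run \<delta> {q0} (X i). nfa_run \<delta> {p} (Y i)) \<inter> F \<noteq> {}"
      by (metis nfa_run_append nfa_run_union)
    then show ?thesis by blast
  qed
  define P where "P i = (SOME p. p \<in> nfa_run \<delta> {q0} (X i) \<and> nfa_run \<delta> {p} (Y i) \<inter> F \<noteq> {})" for i
  have P: "P i \<in> nfa_run \<delta> {q0} (X i) \<and> nfa_run \<delta> {P i} (Y i) \<inter> F \<noteq> {}" if "i<k" for i
    using someI_ex[OF ex[OF that]] unfolding P_def by blast
  have acc: "X i @ Y j \<in> nfa_lang \<Sigma> q0 \<delta> F" if "i<k" "j<k" "P i = P j" for i j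
  proof -
    have "P j \<in> nfa_run \<delta> {q0} (X i)" using P[OF that(1)] that(3) by simp
    hence "nfa_run \<delta> {P j} (Y j) \<subseteq> nfa_run \<delta> {q0} (X i @ Y j)" unfolding nfa_run_append
      using nfa_run_mono[of "{P j}" "nfa_run \<delta> {q0} (X i)" \<delta> "Y j"] by blast
    then show ?thesis using P[OF that(2)] assms(2) that by (auto simp: nfa_lang_def)
  qed
  have inj: "inj_on P {..<k}"
  proof (rule inj_onI, rule ccontr)
    fix i j assume "i \<in> {..<k}" "j \<in> {..<k}" "P i = P j" "i \<noteq> j"
    then show False using acc[of i j] acc[of j i] assms(3) by auto
  qed
  have "P ` {..<k} \<subseteq> Q"
  proof
    fix p assume "p \<in> P ` {..<k}"
    then obtain i where i: "i < k" "p = P i" by auto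
    have "nfa_run \<delta> {q0} (X i) \<subseteq> Q"
      using assms(1,2) i(1) by (intro nfa_run_sub[of Q \<Sigma>]) (auto simp: nfa_def)
    then show "p \<in> Q" using P[OF i(1)] i(2) by blast
  qed
  moreover have "finite Q" using assms(1) by (simp add: nfa_def)
  ultimately show ?thesis using card_inj_on_le[OF inj] by fastforce
qed

lemma foldl_in: "(\<forall>q\<in>Q. \<forall>a\<in>\<Sigma>. \<delta> q a \<in> Q) \<Longrightarrow> q \<in> Q \<Longrightarrow> w \<in> lists \<Sigma> \<Longrightarrow> foldl \<delta> q w \<in> Q"
  by (induction w arbitrary: q) auto

lemma dfa_distinguish:
  assumes "dfa \<Sigma> Q q0 \<delta> F" "dfa_lang \<Sigma> q0 \<delta> F = L"
   "\<forall>i<k. W i \<in> lists \<Sigma>"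
   "\<forall>i<k. \<forall>j<k. i\<noteq>j \<longrightarrow> (\<exists>z\<in>lists \<Sigma>. (W i @ z \<in> L) \<noteq> (W j @ z \<in> L))"
  shows "k \<le> card Q"
proof -
  let ?f = "\<lambda>i. foldl \<delta> q0 (W i)"
  have inj: "inj_on ?f {..<k}"
  proof (rule inj_onI, rule ccontr)
    fix i j assume h: "i \<in> {..<k}" "j\<in>{..<k}" "?f i = ?f j" "i \<noteq> j"
    then obtain z where z: "z \<in> lists \<Sigma>" "(W i @ z \<in> L) \<noteq> (W j @ z \<in> L)" using assms(4) by blast
    have "(W i @ z \<in> L) = (W j @ z \<in> L)" using h z(1) assms(2) assms(3)[rule_format, of i] assms(3)[rule_format, of j] by (auto simp: dfa_lang_def)
    then show False using z by simp
  qed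
  have "?f ` {..<k} \<subseteq> Q"
  proof
    fix p assume "p \<in> ?f ` {..<k}"
    then obtain i where i: "i < k" "p = ?f i" by auto
    show "p \<in> Q" unfolding i(2) using assms(1) assms(3) i(1) by (intro foldl_in[of Q \<Sigma>]) (auto simp: dfa_def)
  qed
  moreover have "finite Q" using assms(1) by (simp add: dfa_def)
  ultimately show ?thesis using card_inj_on_le[OF inj] by fastforce
qed


definition Sg :: "nat \<Rightarrow> nat set list \<Rightarrow> nat set" where "Sg n ts = {1..<n + length ts}"
definition dl :: "nat \<Rightarrow> nat set list \<Rightarrow> nat \<Rightarrow> nat \<Rightarrow> nat set" where
  "dl n ts p a = (if a < n then (if p = 0 then insert 0 ({1..<n} - {a}) else if p = a then {0} else {p}) else ts ! (a - n))"
definition dd :: "nat \<Rightarrow> nat set list \<Rightarrow> nat \<Rightarrow> nat \<Rightarrow> nat" where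
  "dd n ts d a = (if a < n then (if d = 0 then 0 else if a \<in> ts!(d-1) then 0 else d)
      else (if d \<noteq> 0 \<and> ts!(d-1) = {} then d else a - n + 1))"
definition Rel :: "nat \<Rightarrow> nat set list \<Rightarrow> nat \<Rightarrow> nat set \<Rightarrow> bool" where
  "Rel n ts d S \<longleftrightarrow> (d = 0 \<and> 0 \<in> S \<and> S \<subseteq> {0..<n}) \<or> (0 < d \<and> d \<le> length ts \<and> S = ts!(d-1))"

lemma dl_sub: "\<forall>T\<in>set ts. T \<subseteq> {1..<n} \<Longrightarrow> p < n \<Longrightarrow> a \<in> Sg n ts \<Longrightarrow> dl n ts p a \<subseteq> {0..<n}"
proof -
  assume T: "\<forall>T\<in>set ts. T \<subseteq> {1..<n}" and p: "p < n" and a: "a \<in> Sg n ts"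
  show ?thesis
  proof (cases "a < n")
    case True then show ?thesis using p by (auto simp: dl_def)
  next
    case False
    then have "a - n < length ts" using a by (auto simp: Sg_def)
    then have "ts ! (a-n) \<in> set ts" by simp
    then have "ts ! (a-n) \<subseteq> {1..<n}" using T by blast
    then show ?thesis using False by (auto simp: dl_def)
  qed
qed

lemma step:
  assumes T: "\<forall>T\<in>set ts. T \<subseteq> {1..<n}" and R: "Rel n ts d S" and a: "a \<in> Sg n ts"
  shows "Rel n ts (dd n ts d a) (\<Union>p\<in>S. dl n ts p a)"
proof (cases "a < n")
  case an: True
  show ?thesis
  proof (cases "d = 0")
    case True
    then have S: "0 \<in> S" "S \<subseteq> {0..<n}" using R by (auto simp: Rel_def)
    have "0 \<in> dl n ts 0 a" by (simp add: dl_def an)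
    then have c1: "0 \<in> (\<Union>p\<in>S. dl n ts p a)" using S by blast
    have "dl n ts p a \<subseteq> {0..<n}" if "p \<in> S" for p
    proof -
      have "p < n" using that S by auto
      then show ?thesis by (rule dl_sub[OF T _ a])
    qed
    then have c2: "(\<Union>p\<in>S. dl n ts p a) \<subseteq> {0..<n}" by blast
    show ?thesis using c1 c2 True an by (simp add: Rel_def dd_def)
  next
    case False
    then have S: "0 < d" "d \<le> length ts" "S = ts!(d-1)" using R by (auto simp: Rel_def)
    have "ts!(d-1) \<in> set ts" using S by simp
    then have Ssub: "S \<subseteq> {1..<n}" using T S by blast
    have U: "(\<Union>p\<in>S. dl n ts p a) = (if a \<in> S then insert 0 (S - {a}) else S)"
      using Ssub an by (auto simp: dl_def split: if_splits)
    show ?thesis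
    proof (cases "a \<in> S")
      case True
      then show ?thesis using U Ssub an S by (auto simp: Rel_def dd_def)
    next
      case False
      then show ?thesis using U an S by (auto simp: Rel_def dd_def)
    qed
  qed
next
  case an: False
  then have al: "a - n < length ts" using a by (auto simp: Sg_def)
  have U: "(\<Union>p\<in>S. dl n ts p a) = (if S = {} then {} else ts ! (a - n))"
    using an by (auto simp: dl_def)
  show ?thesis
  proof (cases "d \<noteq> 0 \<and> ts!(d-1) = {}")
    case True
    then show ?thesis using R U an by (auto simp: Rel_def dd_def)
  next
    case False
    then have "S \<noteq> {}" using R by (auto simp: Rel_def)
    then show ?thesis using False U an al by (auto simp: Rel_def dd_def)
  qed
qed

lemma run_rel: "\<forall>T\<in>set ts. T \<subseteq> {1..<n} \<Longrightarrow> Rel n ts d S \<Longrightarrow> w \<in> lists (Sg n ts) \<Longrightarrow>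
   Rel n ts (foldl (dd n ts) d w) (nfa_run (dl n ts) S w)"
proof (induction w arbitrary: d S)
  case Nil then show ?case by simp
next
  case (Cons a w)
  then show ?case using step[OF Cons.prems(1,2)] by simp
qed

lemma rel_acc: "\<forall>T\<in>set ts. T \<subseteq> {1..<n} \<Longrightarrow> Rel n ts d S \<Longrightarrow> (d = 0 \<longleftrightarrow> S \<inter> {0} \<noteq> {})"
proof -
  assume T: "\<forall>T\<in>set ts. T \<subseteq> {1..<n}" and R: "Rel n ts d S"
  show ?thesis
  proof (cases "d = 0")
    case True then show ?thesis using R by (auto simp: Rel_def)
  next
    case False
    then have S: "d - 1 < length ts" "S = ts!(d-1)" using R by (auto simp: Rel_def)
    then have "S \<in> set ts" by simp
    then have "S \<subseteq> {1..<n}" using T by blast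
    then show ?thesis using False by auto
  qed
qed

lemma lang_eq:
  assumes "1 \<le> n" "\<forall>T\<in>set ts. T \<subseteq> {1..<n}"
  shows "dfa_lang (Sg n ts) 0 (dd n ts) {0} = nfa_lang (Sg n ts) 0 (dl n ts) {0}"
proof -
  have R0: "Rel n ts 0 {0}" using assms(1) by (simp add: Rel_def)
  have "(foldl (dd n ts) 0 w \<in> {0}) = (nfa_run (dl n ts) {0} w \<inter> {0} \<noteq> {})" if "w \<in> lists (Sg n ts)" for w
    using rel_acc[OF assms(2) run_rel[OF assms(2) R0 that]] by simp
  then show ?thesis unfolding dfa_lang_def nfa_lang_def by blast
qed

lemma suffix:
  assumes "1 \<le> n" "\<forall>T\<in>set ts. T \<subseteq> {1..<n}"
  shows "suffix_closed (nfa_lang (Sg n ts) 0 (dl n ts) {0})"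
  unfolding suffix_closed_def
proof (intro allI impI)
  fix y z assume yz: "y @ z \<in> nfa_lang (Sg n ts) 0 (dl n ts) {0}"
  then have l: "y \<in> lists (Sg n ts)" "z \<in> lists (Sg n ts)" by (auto simp: nfa_lang_def)
  have "nfa_run (dl n ts) {0} (y @ z) \<inter> {0} \<noteq> {}" using yz by (auto simp: nfa_lang_def)
  then have "(\<Union>p\<in>nfa_run (dl n ts) {0} y. nfa_run (dl n ts) {p} z) \<inter> {0} \<noteq> {}"
    by (metis nfa_run_append nfa_run_union)
  then obtain p where p: "p \<in> nfa_run (dl n ts) {0} y" "nfa_run (dl n ts) {p} z \<inter> {0} \<noteq> {}" by blast
  have "nfa_run (dl n ts) {0} y \<subseteq> {0..<n}"
    using assms l(1) dl_sub[OF assms(2)] by (intro nfa_run_sub[of "{0..<n}" "Sg n ts"]) auto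
  then have pn: "p < n" using p by auto
  have "nfa_run (dl n ts) {0} z \<inter> {0} \<noteq> {}"
  proof (cases z)
    case Nil then show ?thesis using p by simp
  next
    case (Cons a w)
    have "dl n ts p a \<subseteq> dl n ts 0 a" using pn by (auto simp: dl_def)
    then have "nfa_run (dl n ts) (dl n ts p a) w \<subseteq> nfa_run (dl n ts) (dl n ts 0 a) w" by (rule nfa_run_mono)
    then show ?thesis using p Cons by auto
  qed
  then show "z \<in> nfa_lang (Sg n ts) 0 (dl n ts) {0}" using l by (auto simp: nfa_lang_def)
qed


lemma construction:
  assumes n1: "1 \<le> n" and T: "\<forall>T\<in>set ts. T \<subseteq> {1..<n}" and dist: "distinct ts"
    and ch: "\<forall>j<n-1. j < length ts \<and> ts!j = {1..Suc j}"
  shows "\<exists>(\<Sigma>::nat set) (Q::nat set) q0 \<delta> F.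
           minimal_nfa \<Sigma> Q q0 \<delta> F \<and> card Q = n \<and>
           suffix_closed (nfa_lang \<Sigma> q0 \<delta> F) \<and>
           min_dfa_size \<Sigma> (nfa_lang \<Sigma> q0 \<delta> F) (length ts + 1)"
proof -
  define L where "L = nfa_lang (Sg n ts) 0 (dl n ts) {0}"
  have Lm: "w \<in> L \<longleftrightarrow> w \<in> lists (Sg n ts) \<and> foldl (dd n ts) 0 w = 0" for w
    using lang_eq[OF n1 T] unfolding L_def[symmetric] by (auto simp: dfa_lang_def)
  have L0: "[] \<in> L" by (simp add: Lm)
  have L1: "[n+i] \<notin> L" if "i < length ts" for i by (simp add: Lm dd_def)
  have L2: "[n+i, q] \<in> L \<longleftrightarrow> q \<in> ts!i" if "i < length ts" "1 \<le> q" "q < n" for i q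
    using that by (auto simp: Lm dd_def Sg_def)
  have nfaA: "nfa (Sg n ts) {0..<n} 0 (dl n ts) {0}"
    using n1 dl_sub[OF T] by (auto simp: nfa_def Sg_def)
  have dfaA: "dfa (Sg n ts) {0..<length ts + 1} 0 (dd n ts) {0}"
    by (auto simp: dfa_def Sg_def dd_def)
  have minN: "minimal_nfa (Sg n ts) {0..<n} 0 (dl n ts) {0}"
    unfolding minimal_nfa_def
  proof (intro conjI nfaA allI impI)
    fix Q' :: "nat set" and q0' \<delta>' F'
    assume h: "nfa (Sg n ts) Q' q0' \<delta>' F' \<and> nfa_lang (Sg n ts) q0' \<delta>' F' = nfa_lang (Sg n ts) 0 (dl n ts) {0}"
    define X where "X i = (if i = 0 then [] else [n + i - 1])" for i
    define Y where "Y i = (if i = 0 then [] else [i])" for i :: nat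
    have mem: "X i @ Y j \<in> L \<longleftrightarrow> (i = 0 \<and> j = 0) \<or> (i = 0 \<and> 0 < j) \<or> (0 < i \<and> 0 < j \<and> j \<le> i)"
      if "i < n" "j < n" for i j
    proof (cases "i = 0")
      case True then show ?thesis using that by (cases "j = 0") (auto simp: X_def Y_def Lm dd_def Sg_def)
    next
      case False
      then have "i - 1 < n - 1" using that by simp
      then have i1: "i - 1 < length ts" "ts ! (i-1) = {1..i}" using ch False by auto
      show ?thesis
      proof (cases "j = 0")
        case True then show ?thesis using False L1[OF i1(1)] n1 by (simp add: X_def Y_def)
      next
        case j: False
        have "X i @ Y j = [n + (i-1), j]" using False j by (simp add: X_def Y_def)
        then show ?thesis using L2[OF i1(1), of j] i1 j that False by auto
      qed
    qed
    have "n \<le> card Q'"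
    proof (rule nfa_fooling[of "Sg n ts" Q' q0' \<delta>' F' n X Y])
      show "nfa (Sg n ts) Q' q0' \<delta>' F'" using h by simp
      have lS: "X i \<in> lists (Sg n ts) \<and> Y i \<in> lists (Sg n ts)" if "i < n" for i
      proof (cases "i = 0")
        case False then have "i - 1 < length ts" using ch that by auto
        then show ?thesis using False that by (auto simp: X_def Y_def Sg_def)
      qed (simp add: X_def Y_def)
      show "\<forall>i<n. X i \<in> lists (Sg n ts) \<and> Y i \<in> lists (Sg n ts) \<and> X i @ Y i \<in> nfa_lang (Sg n ts) q0' \<delta>' F'"
        using lS mem h unfolding L_def by auto
      show "\<forall>i<n. \<forall>j<n. i \<noteq> j \<longrightarrow> X i @ Y j \<notin> nfa_lang (Sg n ts) q0' \<delta>' F' \<or> X j @ Y i \<notin> nfa_lang (Sg n ts) q0' \<delta>' F'"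
        using mem h unfolding L_def by (metis le_cases le_antisym not_gr_zero)
    qed
    then show "card {0..<n} \<le> card Q'" by simp
  qed
  have minD: "min_dfa_size (Sg n ts) L (length ts + 1)"
    unfolding min_dfa_size_def
  proof (intro conjI allI impI)
    show "\<exists>(Q::nat set) q0 \<delta> F. dfa (Sg n ts) Q q0 \<delta> F \<and> dfa_lang (Sg n ts) q0 \<delta> F = L \<and> card Q = length ts + 1"
      using dfaA lang_eq[OF n1 T] unfolding L_def by fastforce
    fix Q :: "nat set" and q0 \<delta> F
    assume h: "dfa (Sg n ts) Q q0 \<delta> F \<and> dfa_lang (Sg n ts) q0 \<delta> F = L"
    define W where "W i = (if i = 0 then [] else [n + i - 1])" for i
    show "length ts + 1 \<le> card Q"
    proof (rule dfa_distinguish[of "Sg n ts" Q q0 \<delta> F L "length ts + 1" W])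
      show "dfa (Sg n ts) Q q0 \<delta> F" "dfa_lang (Sg n ts) q0 \<delta> F = L" using h by auto
      show "\<forall>i<length ts + 1. W i \<in> lists (Sg n ts)" using n1 by (auto simp: W_def Sg_def)
      show "\<forall>i<length ts + 1. \<forall>j<length ts + 1. i \<noteq> j \<longrightarrow> (\<exists>z\<in>lists (Sg n ts). (W i @ z \<in> L) \<noteq> (W j @ z \<in> L))"
      proof (intro allI impI)
        fix i j assume ij: "i < length ts + 1" "j < length ts + 1" "i \<noteq> j"
        show "\<exists>z\<in>lists (Sg n ts). (W i @ z \<in> L) \<noteq> (W j @ z \<in> L)"
        proof (cases "i = 0 \<or> j = 0")
          case True
          have e: "W k @ [] \<in> L \<longleftrightarrow> k = 0" if "k < length ts + 1" for k
          proof (cases "k = 0")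
            case False
            then have "k - 1 < length ts" using that by simp
            then show ?thesis using L1[of "k-1"] False n1 by (simp add: W_def)
          qed (simp add: W_def L0)
          show ?thesis using True ij e[of i] e[of j] by (intro bexI[of _ "[]"]) auto
        next
          case False
          then have "i - 1 \<noteq> j - 1" "i - 1 < length ts" "j - 1 < length ts" using ij by auto
          then have d: "ts ! (i-1) \<noteq> ts ! (j-1)" using dist by (simp add: nth_eq_iff_index_eq)
          then obtain q where q: "(q \<in> ts!(i-1)) \<noteq> (q \<in> ts!(j-1))" by blast
          have "ts!(i-1) \<in> set ts" "ts!(j-1) \<in> set ts" using ij False by auto
          then have "ts!(i-1) \<subseteq> {1..<n}" "ts!(j-1) \<subseteq> {1..<n}" using T by auto
          then have qn: "1 \<le> q" "q < n" using q by auto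
          have "W i @ [q] = [n + (i-1), q]" "W j @ [q] = [n + (j-1), q]" using False by (auto simp: W_def)
          then show ?thesis using L2[of "i-1" q] L2[of "j-1" q] qn q ij False
            by (intro bexI[of _ "[q]"]) (auto simp: Sg_def)
        qed
      qed
    qed
  qed
  show ?thesis
    using minN minD suffix[OF n1 T] unfolding L_def by (intro exI[of _ "Sg n ts"] exI[of _ "{0..<n}"]) auto
qed


lemma exists_ts:
  assumes "1 \<le> n" "n \<le> \<alpha>" "\<alpha> \<le> 2^(n-1)+1"
  shows "\<exists>ts. (\<forall>T\<in>set ts. T \<subseteq> {1..<n}) \<and> distinct ts \<and> (\<forall>j<n-1. j < length ts \<and> ts!j = {1..Suc j}) \<and> length ts + 1 = \<alpha>"
proof -
  define ch where "ch = map (\<lambda>j. {1..Suc j}) [0..<n-1]"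
  have chd: "distinct ch" unfolding ch_def by (auto simp: distinct_map inj_on_def)
  have chs: "set ch \<subseteq> Pow {1..<n}" by (auto simp: ch_def)
  have cardch: "card (set ch) = n - 1" using distinct_card[OF chd] by (simp add: ch_def)
  have cardP0: "card (Pow {1..<n}) = 2^(n-1)" by (simp add: card_Pow)
  define P where "P = Pow {1..<n} - set ch"
  have cP: "card P = 2^(n-1) - (n-1)" unfolding P_def
    using card_Diff_subset[OF finite_set chs] cardch cardP0 by simp
  have "\<alpha> - n \<le> card P" unfolding cP using assms by linarith
  then obtain R where R: "R \<subseteq> P" "card R = \<alpha> - n" by (meson obtain_subset_with_card_n)
  have "finite R" using R(1) finite_subset unfolding P_def by fastforce
  then obtain rs where rs: "set rs = R" "distinct rs" using finite_distinct_list by blast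
  have lrs: "length rs = \<alpha> - n" using distinct_card[OF rs(2)] rs(1) R(2) by simp
  have lch: "length ch = n - 1" by (simp add: ch_def)
  show ?thesis
  proof (intro exI[of _ "ch @ rs"] conjI)
    show "\<forall>T\<in>set (ch @ rs). T \<subseteq> {1..<n}" using chs R(1) rs(1) unfolding P_def by auto
    show "distinct (ch @ rs)" using chd rs R(1) unfolding P_def by auto
    show "\<forall>j<n - 1. j < length (ch @ rs) \<and> (ch @ rs) ! j = {1..Suc j}"
      using lch by (auto simp: nth_append ch_def)
    show "length (ch @ rs) + 1 = \<alpha>" using lch lrs assms by simp
  qed
qed

theorem mainTheorem8:
  fixes n \<alpha> :: nat
  assumes "1 \<le> n" and "n \<le> \<alpha>" and "\<alpha> \<le> 2 ^ (n - 1) + 1"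
  shows "\<exists>(\<Sigma>::nat set) (Q::nat set) q0 \<delta> F.
           minimal_nfa \<Sigma> Q q0 \<delta> F \<and> card Q = n \<and>
           suffix_closed (nfa_lang \<Sigma> q0 \<delta> F) \<and>
           min_dfa_size \<Sigma> (nfa_lang \<Sigma> q0 \<delta> F) \<alpha>"
proof -
  obtain ts where ts: "\<forall>T\<in>set ts. T \<subseteq> {1..<n}" "distinct ts" "\<forall>j<n-1. j < length ts \<and> ts!j = {1..Suc j}" "length ts + 1 = \<alpha>"
    using exists_ts[OF assms] by blast
  show ?thesis using construction[OF assms(1) ts(1-3)] ts(4) by simp
qed

end
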